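(* Let $T,N,N',L,L'$ be positive integers, let $\lambda\ge0$ and $\eta>0$ be real numbers, and let $p_1<p_2<\dots<p_L$ be primes with $p_i\ge 2L(L+T-1)\eta$ for every $i\in[L]$ and $p_L> LN'/L'-2L-2T+2$. Let $N_i=p_i+2L+2T-2$ for $i\in[L]$, and suppose $\lambda<\dfrac{N'-L-1/\eta}{N_L/L-N'/L'}$. Then $$\left(\frac{N_L\lambda}{L}+\sum_{i=1}^L\frac{N_i}{p_i}\right)^{-1}>\left(N'\left(\frac{\lambda}{L'}+1\right)\right)^{-1}.$$ *)

theory Defs
  imports Complex_Main "HOL-Computational_Algebra.Primes"
begin

end

theory Submission
  imports Defs
begin

theorem lemma4:
  fixes T N N' L L' :: nat and lam \<eta> :: real and p :: "nat \<Rightarrow> nat"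
  assumes "T > 0" "N > 0" "N' > 0" "L > 0" "L' > 0"
    and "lam \<ge> 0" "\<eta> > 0"
    and "\<And>i. i \<in> {1..L} \<Longrightarrow> prime (p i)"
    and "\<And>i j. i \<in> {1..L} \<Longrightarrow> j \<in> {1..L} \<Longrightarrow> i < j \<Longrightarrow> p i < p j"
    and "\<And>i. i \<in> {1..L} \<Longrightarrow> real (p i) \<ge> 2 * real L * (real L + real T - 1) * \<eta>"
    and "real (p L) > real L * real N' / real L' - 2 * real L - 2 * real T + 2"
    and "lam < (real N' - real L - 1 / \<eta>) /
              ((real (p L) + 2 * real L + 2 * real T - 2) / real L - real N' / real L')"
  shows "inverse ((real (p L) + 2 * real L + 2 * real T - 2) * lam / real L
                  + (\<Sum>i=1..L. (real (p i) + 2 * real L + 2 * real T - 2) / real (p i)))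
         > inverse (real N' * (lam / real L' + 1))"
proof -
  let ?c = "2 * real L + 2 * real T - 2"
  have c0: "?c > 0" using assms(1,4) by simp
  have key: "(real (p i) + 2 * real L + 2 * real T - 2) / real (p i) \<le> 1 + 1 / (real L * \<eta>)" if i: "i \<in> {1..L}" for i
  proof -
    have pp: "real (p i) > 0" using assms(8)[OF i] prime_gt_0_nat by simp
    have pb: "real (p i) \<ge> ?c * (real L * \<eta>)" using assms(10)[OF i] by (simp add: algebra_simps)
    have "(real (p i) + 2 * real L + 2 * real T - 2) / real (p i) = 1 + ?c / real (p i)" using pp by (simp add: field_simps)
    also have "?c / real (p i) \<le> 1 / (real L * \<eta>)"
      using pp pb assms(4,7) by (simp add: divide_simps mult_ac)
    finally show ?thesis by simp
  qed
  have S: "(\<Sum>i=1..L. (real (p i) + 2 * real L + 2 * real T - 2) / real (p i)) \<le> real L + 1 / \<eta>"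
  proof -
    have "(\<Sum>i=1..L. (real (p i) + 2 * real L + 2 * real T - 2) / real (p i)) \<le> (\<Sum>i=1..L. 1 + 1 / (real L * \<eta>))"
      by (rule sum_mono) (use key in auto)
    also have "\<dots> = real L + 1 / \<eta>" using assms(4) by (simp add: field_simps)
    finally show ?thesis .
  qed
  have Spos: "(\<Sum>i=1..L. (real (p i) + 2 * real L + 2 * real T - 2) / real (p i)) > 0"
  proof (rule sum_pos)
    show "finite {1..L}" by simp
    show "{1..L} \<noteq> {}" using assms(4) by simp
    fix i assume i: "i \<in> {1..L}"
    have pp: "real (p i) > 0" using assms(8)[OF i] prime_gt_0_nat by simp
    then show "(real (p i) + 2 * real L + 2 * real T - 2) / real (p i) > 0" using c0 by simp
  qed
  define D where "D = (real (p L) + 2 * real L + 2 * real T - 2) / real L - real N' / real L'"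
  have D0: "D > 0" using assms(11) assms(4,5) unfolding D_def
    by (simp add: field_simps)
  have lD: "lam * D < real N' - real L - 1 / \<eta>"
  proof -
    have "lam < (real N' - real L - 1 / \<eta>) / D" using assms(12) unfolding D_def by simp
    then show ?thesis using D0 by (simp add: pos_less_divide_eq mult.commute)
  qed
  have "(real (p L) + 2 * real L + 2 * real T - 2) * lam / real L + (\<Sum>i=1..L. (real (p i) + 2 * real L + 2 * real T - 2) / real (p i))
        = lam * D + lam * real N' / real L' + (\<Sum>i=1..L. (real (p i) + 2 * real L + 2 * real T - 2) / real (p i))"
    unfolding D_def by (simp add: field_simps)
  also have "\<dots> < real N' * (lam / real L' + 1)" using lD S by (simp add: field_simps)
  finally have lt: "(real (p L) + 2 * real L + 2 * real T - 2) * lam / real L + (\<Sum>i=1..L. (real (p i) + 2 * real L + 2 * real T - 2) / real (p i))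
        < real N' * (lam / real L' + 1)" .
  have pos: "(real (p L) + 2 * real L + 2 * real T - 2) * lam / real L + (\<Sum>i=1..L. (real (p i) + 2 * real L + 2 * real T - 2) / real (p i)) > 0"
  proof -
    have "(real (p L) + 2 * real L + 2 * real T - 2) * lam / real L \<ge> 0" using assms(6) c0 by simp
    then show ?thesis using Spos by linarith
  qed
  show ?thesis using less_imp_inverse_less[OF lt pos] by simp
qed

end
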